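(* In the setting below, if $\eta \geq \eta_0$ and an oscillation happens at iteration $t$, then $\hat{w}_{t+1} \geq (1+\gamma^2)\hat{w}_t$.
   Context: Dimension $d=2$. Data $x_1,\dots,x_n\in\mathbb{R}^2$ with $\|x_i\|\le 1$, linearly separable (some $w$ has $\langle w,x_i\rangle>0$ for all $i$). $F(w) = \frac{1}{n}\sum_{i=1}^n \log(1+\exp(-\langle w, x_i\rangle))$. Maximum margin $\gamma = \max_{\|w\|=1}\min_i \langle w, x_i\rangle$ with maximizer the unit vector $w_*$; $v_*$ is a fixed unit vector orthogonal to $w_*$. Gradient descent: $w_0=0$, $w_{t+1} = w_t - \eta\nabla F(w_t)$ with constant $\eta>0$. $\hat{w}_t = \langle w_t, w_*\rangle$, $\tilde{w}_t = \langle w_t, v_*\rangle$. $\eta_0 = \max(n, \frac{32}{\gamma^2}\log\frac{256}{\gamma^2})$. $\lambda = \frac{1}{\gamma}\log\frac{1}{\exp(1/(8\eta))-1}$. An oscillation happens at iteration $t\ge 0$ if all of: (1) $\hat{w}_t \geq \lambda$; (2) $F(w_t) > 1/(8\eta)$ and $F(w_{t+1}) > 1/(8\eta)$; (3) $\tilde{w}_{t+1}\tilde{w}_t < 0$. *)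

theory Defs
  imports "HOL-Analysis.Analysis"
begin

definition logloss :: "nat \<Rightarrow> (nat \<Rightarrow> real^2) \<Rightarrow> real^2 \<Rightarrow> real" where
  "logloss n x w = (1 / real n) * (\<Sum>i<n. ln (1 + exp (- (w \<bullet> x i))))"

definition logloss_grad :: "nat \<Rightarrow> (nat \<Rightarrow> real^2) \<Rightarrow> real^2 \<Rightarrow> real^2" where
  "logloss_grad n x w = (1 / real n) *\<^sub>R
     (\<Sum>i<n. (- 1 / (1 + exp (w \<bullet> x i))) *\<^sub>R x i)"

primrec gd :: "nat \<Rightarrow> (nat \<Rightarrow> real^2) \<Rightarrow> real \<Rightarrow> nat \<Rightarrow> real^2" where
  "gd n x \<eta> 0 = 0"
| "gd n x \<eta> (Suc t) = gd n x \<eta> t - \<eta> *\<^sub>R logloss_grad n x (gd n x \<eta> t)"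

definition separable :: "nat \<Rightarrow> (nat \<Rightarrow> real^2) \<Rightarrow> bool" where
  "separable n x \<longleftrightarrow> (\<exists>w. \<forall>i<n. w \<bullet> x i > 0)"

definition margin_of :: "nat \<Rightarrow> (nat \<Rightarrow> real^2) \<Rightarrow> real^2 \<Rightarrow> real" where
  "margin_of n x w = Min ((\<lambda>i. w \<bullet> x i) ` {..<n})"

definition max_margin :: "nat \<Rightarrow> (nat \<Rightarrow> real^2) \<Rightarrow> real" where
  "max_margin n x = (SUP w\<in>{w. norm w = 1}. margin_of n x w)"

definition eta0 :: "nat \<Rightarrow> real \<Rightarrow> real" where
  "eta0 n \<gamma> = max (real n) (32 / \<gamma>\<^sup>2 * ln (256 / \<gamma>\<^sup>2))"

definition lam :: "real \<Rightarrow> real \<Rightarrow> real" where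
  "lam \<gamma> \<eta> = (1 / \<gamma>) * ln (1 / (exp (1 / (8 * \<eta>)) - 1))"

definition oscillation ::
  "nat \<Rightarrow> (nat \<Rightarrow> real^2) \<Rightarrow> real \<Rightarrow> real^2 \<Rightarrow> real^2 \<Rightarrow> nat \<Rightarrow> bool" where
  "oscillation n x \<eta> wstar vstar t \<longleftrightarrow>
     gd n x \<eta> t \<bullet> wstar \<ge> lam (max_margin n x) \<eta>
   \<and> logloss n x (gd n x \<eta> t) > 1 / (8 * \<eta>)
   \<and> logloss n x (gd n x \<eta> (Suc t)) > 1 / (8 * \<eta>)
   \<and> (gd n x \<eta> (Suc t) \<bullet> vstar) * (gd n x \<eta> t \<bullet> vstar) < 0"

end

theory Submission
  imports Defs
begin

lemma orth_alg:
  fixes a b c d :: real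
  assumes "a*a+b*b = 1" "c*c+d*d=1" "a*c+b*d = 0"
  shows "a*a + c*c = 1 \<and> a*b + c*d = 0"
  using assms by algebra

lemma decomp2:
  fixes w v y z :: "real^2"
  assumes "norm w = 1" "norm v = 1" "v \<bullet> w = 0"
  shows "y \<bullet> z = (y \<bullet> w) * (w \<bullet> z) + (y \<bullet> v) * (v \<bullet> z)"
proof -
  have w1: "w \<bullet> w = 1" using assms(1) by (simp add: norm_eq_1)
  have v1: "v \<bullet> v = 1" using assms(2) by (simp add: norm_eq_1)
  let ?p = "w$1" let ?q = "w$2" let ?r = "v$1" let ?s = "v$2"
  have e1: "?p*?p+?q*?q = 1" using w1 by (simp add: inner_vec_def sum_2)
  have e2: "?r*?r+?s*?s = 1" using v1 by (simp add: inner_vec_def sum_2)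
  have e3: "?p*?r+?q*?s = 0" using assms(3) by (simp add: inner_vec_def sum_2 mult.commute)
  have a1: "?p*?p + ?r*?r = 1" "?p*?q + ?r*?s = 0" using orth_alg[OF e1 e2 e3] by auto
  have a2: "?q*?q + ?s*?s = 1"
    using e1 e2 a1(1) by linarith
  show ?thesis
    unfolding inner_vec_def sum_2 using a1 a2
    by (simp add: algebra_simps) algebra
qed

lemma gd_step_inner:
  "gd n x \<eta> (Suc t) \<bullet> u = gd n x \<eta> t \<bullet> u
     + \<eta> / real n * (\<Sum>k<n. (1 / (1 + exp (gd n x \<eta> t \<bullet> x k))) * (x k \<bullet> u))"
  by (simp add: logloss_grad_def inner_diff_left inner_add_left inner_sum_left sum_distrib_left
      sum_negf divide_simps)


lemma ln_half_bound: fixes K :: real assumes "K > 0" shows "ln K \<le> K / 2"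
proof -
  have "ln K = ln 2 + ln (K/2)" using assms by (simp add: ln_div)
  also have "ln (K/2) \<le> K/2 - 1" using assms by (intro ln_le_minus_one) auto
  also have "ln (2::real) < 1" by (rule ln_2_less_1)
  finally show ?thesis by simp
qed

lemma eta_bound:
  fixes g \<eta> :: real
  assumes g0: "0 < g" and g1: "g \<le> 1" and e0: "0 < \<eta>"
    and eb: "\<eta> \<ge> 32 / g\<^sup>2 * ln (256 / g\<^sup>2)"
  shows "ln (1 / (exp (1 / (8 * \<eta>)) - 1)) \<le> \<eta> * g\<^sup>2 / 4"
proof -
  have x1: "exp (1 / (8 * \<eta>)) - 1 \<ge> 1 / (8 * \<eta>)"
    using exp_ge_add_one_self[of "1/(8*\<eta>)"] by linarith
  have p1: "1 / (8 * \<eta>) > 0" using e0 by simp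
  have "1 / (exp (1 / (8 * \<eta>)) - 1) \<le> 8 * \<eta>"
  proof -
    have "1 / (exp (1 / (8 * \<eta>)) - 1) \<le> 1 / (1 / (8 * \<eta>))"
      using x1 p1 by (intro divide_left_mono) auto
    then show ?thesis by simp
  qed
  moreover have "1 / (exp (1 / (8 * \<eta>)) - 1) > 0" using x1 p1 by simp
  ultimately have l1: "ln (1 / (exp (1 / (8 * \<eta>)) - 1)) \<le> ln (8 * \<eta>)" by simp
  define K where "K = \<eta> * g\<^sup>2 / 4"
  have K0: "K > 0" using g0 e0 by (simp add: K_def)
  have g2: "g\<^sup>2 > 0" "g\<^sup>2 \<le> 1" using g0 g1 by (auto simp: power_le_one)
  have "8 * \<eta> = K * (32 / g\<^sup>2)" using g2 by (simp add: K_def field_simps)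
  moreover have "ln (K * (32 / g\<^sup>2)) = ln K + ln (32 / g\<^sup>2)"
    using K0 g2 by (intro ln_mult_pos) auto
  ultimately have l2: "ln (8 * \<eta>) = ln K + ln (32 / g\<^sup>2)" by simp
  have l3: "ln (32 / g\<^sup>2) \<le> ln (256 / g\<^sup>2)" using g2 by (simp add: divide_right_mono)
  have L0: "ln (256 / g\<^sup>2) \<ge> 0" using g2 by (simp add: field_simps)
  have "K \<ge> 8 * ln (256 / g\<^sup>2)"
  proof -
    have "\<eta> * g\<^sup>2 \<ge> (32 / g\<^sup>2 * ln (256 / g\<^sup>2)) * g\<^sup>2"
      using eb g2 by (intro mult_right_mono) auto
    thus ?thesis using g2 by (simp add: K_def)
  qed
  then show ?thesis using l1 l2 l3 L0 ln_half_bound[OF K0] by (simp add: K_def)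
qed

lemma loss_thresh:
  fixes L z :: real
  assumes "L > 0" "ln (1 + exp (- z)) > L"
  shows "z < ln (1 / (exp L - 1))"
proof -
  have "exp L < 1 + exp (- z)"
    using assms(2) by (metis exp_less_mono exp_ln add_pos_pos exp_gt_zero zero_less_one)
  hence a: "exp L - 1 < exp (- z)" by simp
  have b: "exp L - 1 > 0" using assms(1) by simp
  have "ln (exp L - 1) < - z" using a b by (metis ln_less_cancel_iff exp_gt_zero ln_exp)
  thus ?thesis using b by (simp add: ln_div)
qed


lemma abs_diff_opp: fixes a b :: real assumes "a * b < 0" shows "\<bar>a - b\<bar> = \<bar>a\<bar> + \<bar>b\<bar>"
  using assms by (auto simp: abs_if mult_less_0_iff)

theorem lemma3:
  fixes n :: nat and x :: "nat \<Rightarrow> real^2" and \<eta> :: real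
    and wstar vstar :: "real^2" and t :: nat
  assumes "n \<ge> 1"
    and "\<forall>i<n. norm (x i) \<le> 1"
    and "separable n x"
    and "norm wstar = 1"
    and "margin_of n x wstar = max_margin n x"
    and "norm vstar = 1" and "vstar \<bullet> wstar = 0"
    and "\<eta> > 0"
    and "\<eta> \<ge> eta0 n (max_margin n x)"
    and "oscillation n x \<eta> wstar vstar t"
  shows "gd n x \<eta> (Suc t) \<bullet> wstar \<ge> (1 + (max_margin n x)\<^sup>2) * (gd n x \<eta> t \<bullet> wstar)"
proof -
  note n1 = assms(1) and xb = assms(2) and sep = assms(3) and wn = assms(4) and mg = assms(5)
    and vn = assms(6) and vw = assms(7) and e0 = assms(8) and eb = assms(9) and osc = assms(10)
  define g where "g = max_margin n x"
  define W where "W = gd n x \<eta>"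
  define h where "h t = W t \<bullet> wstar" for t
  define v where "v t = W t \<bullet> vstar" for t
  define s where "s t k = 1 / (1 + exp (W t \<bullet> x k))" for t k
  have fin: "finite ((\<lambda>i. wstar \<bullet> x i) ` {..<n})" by simp
  have ai: "wstar \<bullet> x k \<ge> g" if "k < n" for k
  proof -
    have "g = Min ((\<lambda>i. wstar \<bullet> x i) ` {..<n})" using mg by (simp add: g_def margin_of_def)
    also have "\<dots> \<le> wstar \<bullet> x k" using that by (intro Min_le) auto
    finally show ?thesis .
  qed
  have ai': "x k \<bullet> wstar \<ge> g" if "k < n" for k using ai[OF that] by (simp add: inner_commute)
  have cs: "\<bar>u \<bullet> x k\<bar> \<le> 1" if "norm u = 1" "k < n" for u k
  proof -
    have "\<bar>u \<bullet> x k\<bar> \<le> norm u * norm (x k)" by (rule Cauchy_Schwarz_ineq2)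
    also have "\<dots> \<le> 1" using that xb by simp
    finally show ?thesis .
  qed
  have bk: "\<bar>x k \<bullet> vstar\<bar> \<le> 1" if "k < n" for k using cs[OF vn that] by (simp add: inner_commute)
  have g1: "g \<le> 1" using ai[of 0] cs[OF wn, of 0] n1 by auto
  have bdd: "bdd_above ((margin_of n x) ` {w. norm w = 1})"
  proof (rule bdd_aboveI2)
    fix w :: "real^2" assume "w \<in> {w. norm w = 1}"
    hence "norm w = 1" by simp
    have "margin_of n x w \<le> w \<bullet> x 0" unfolding margin_of_def using n1 by (intro Min_le) auto
    also have "\<dots> \<le> 1" using cs[OF \<open>norm w = 1\<close>, of 0] n1 by auto
    finally show "margin_of n x w \<le> 1" .
  qed
  have g0: "g > 0"
  proof -
    obtain w0 where w0: "\<forall>i<n. w0 \<bullet> x i > 0" using sep unfolding separable_def by blast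
    have "w0 \<noteq> 0" using w0 n1 by (metis inner_zero_left less_irrefl less_le_trans zero_less_one)
    define u where "u = (1 / norm w0) *\<^sub>R w0"
    have un: "norm u = 1" using \<open>w0 \<noteq> 0\<close> by (simp add: u_def)
    have "\<forall>i<n. u \<bullet> x i > 0" using w0 \<open>w0 \<noteq> 0\<close> by (simp add: u_def)
    hence "margin_of n x u > 0" unfolding margin_of_def using n1 by (subst Min_gr_iff) (auto simp: lessThan_empty_iff)
    also have "margin_of n x u \<le> g" unfolding g_def max_margin_def
      using un bdd by (intro cSUP_upper) auto
    finally show ?thesis .
  qed
  have spos: "s t k > 0" for t k by (simp add: s_def add_pos_pos)
  have stepu: "W (Suc t) \<bullet> u = W t \<bullet> u + \<eta> / real n * (\<Sum>k<n. s t k * (x k \<bullet> u))" for t u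
    unfolding W_def s_def by (rule gd_step_inner)
  define Dh where "Dh t = \<eta> / real n * (\<Sum>k<n. s t k * (x k \<bullet> wstar))" for t
  define Dv where "Dv t = \<eta> / real n * (\<Sum>k<n. s t k * (x k \<bullet> vstar))" for t
  have hs: "h (Suc t) = h t + Dh t" for t unfolding h_def Dh_def by (rule stepu)
  have vs: "v (Suc t) = v t + Dv t" for t unfolding v_def Dv_def by (rule stepu)
  have cn: "\<eta> / real n \<ge> 0" using e0 by simp
  have sum_s_a: "(\<Sum>k<n. s t k * (x k \<bullet> wstar)) \<ge> g * (\<Sum>k<n. s t k)" for t
  proof -
    have "g * (\<Sum>k<n. s t k) = (\<Sum>k<n. s t k * g)" by (simp add: sum_distrib_left mult.commute)
    also have "\<dots> \<le> (\<Sum>k<n. s t k * (x k \<bullet> wstar))"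
      using ai' spos by (intro sum_mono mult_left_mono) (auto intro: less_imp_le)
    finally show ?thesis .
  qed
  have sum_s_b: "\<bar>\<Sum>k<n. s t k * (x k \<bullet> vstar)\<bar> \<le> (\<Sum>k<n. s t k)" for t
  proof -
    have "\<bar>\<Sum>k<n. s t k * (x k \<bullet> vstar)\<bar> \<le> (\<Sum>k<n. \<bar>s t k * (x k \<bullet> vstar)\<bar>)"
      by (rule sum_abs)
    also have "\<dots> \<le> (\<Sum>k<n. s t k)"
    proof (rule sum_mono)
      fix k assume "k \<in> {..<n}"
      hence "\<bar>x k \<bullet> vstar\<bar> \<le> 1" using bk by auto
      hence "s t k * \<bar>x k \<bullet> vstar\<bar> \<le> s t k * 1" using spos[of t k] by (intro mult_left_mono) auto
      thus "\<bar>s t k * (x k \<bullet> vstar)\<bar> \<le> s t k" using spos[of t k] by (simp add: abs_mult)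
    qed
    finally show ?thesis .
  qed
  have key: "Dh t \<ge> g * \<bar>Dv t\<bar>" for t
  proof -
    have "g * \<bar>\<Sum>k<n. s t k * (x k \<bullet> vstar)\<bar> \<le> g * (\<Sum>k<n. s t k)"
      using sum_s_b g0 by (intro mult_left_mono) auto
    also have "\<dots> \<le> (\<Sum>k<n. s t k * (x k \<bullet> wstar))" by (rule sum_s_a)
    finally have "\<eta> / real n * (g * \<bar>\<Sum>k<n. s t k * (x k \<bullet> vstar)\<bar>)
        \<le> \<eta> / real n * (\<Sum>k<n. s t k * (x k \<bullet> wstar))" using cn by (intro mult_left_mono)
    thus ?thesis unfolding Dh_def Dv_def using cn e0 by (simp add: abs_mult mult_ac)
  qed
  have Dh0: "Dh t \<ge> 0" for t using key[of t] g0 by (smt (verit) abs_ge_zero mult_nonneg_nonneg)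
  have h0: "h 0 = 0" by (simp add: h_def W_def)
  have hnn: "h t \<ge> 0" for t
    by (induction t) (auto simp: h0 hs intro: add_nonneg_nonneg Dh0)
  have h1: "h (Suc t) \<ge> \<eta> * g / 2" for t
  proof (induction t)
    case 0
    have s0: "s 0 k = 1/2" for k by (simp add: s_def W_def)
    have "Dh 0 = \<eta> / real n * (\<Sum>k<n. (1/2) * (x k \<bullet> wstar))" unfolding Dh_def s0 by simp
    also have "\<dots> \<ge> \<eta> / real n * (\<Sum>k<n. (1/2) * g)"
      using ai' cn by (intro mult_left_mono sum_mono) auto
    finally have "Dh 0 \<ge> \<eta> / real n * (real n * (g / 2))" by simp
    hence "Dh 0 \<ge> \<eta> * g / 2" using n1 by simp
    then show ?case using hs[of 0] h0 by simp
  next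
    case (Suc t)
    then show ?case using hs[of "Suc t"] Dh0[of "Suc t"] by simp
  qed
  have glam: "g * lam g \<eta> = ln (1 / (exp (1 / (8 * \<eta>)) - 1))"
    using g0 by (simp add: lam_def)
  have vbound: "\<bar>v t\<bar> > g * h t - g * lam g \<eta>" if F: "logloss n x (W t) > 1 / (8 * \<eta>)" for t
  proof -
    have "\<exists>i<n. ln (1 + exp (- (W t \<bullet> x i))) > 1 / (8 * \<eta>)"
    proof (rule ccontr)
      assume "\<not> ?thesis"
      hence "(\<Sum>i<n. ln (1 + exp (- (W t \<bullet> x i)))) \<le> (\<Sum>i<n. 1 / (8 * \<eta>))"
        by (intro sum_mono) (meson lessThan_iff not_less)
      hence "(\<Sum>i<n. ln (1 + exp (- (W t \<bullet> x i)))) \<le> real n * (1 / (8 * \<eta>))" by simp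
      hence "(1 / real n) * (\<Sum>i<n. ln (1 + exp (- (W t \<bullet> x i)))) \<le> (1 / real n) * (real n * (1 / (8 * \<eta>)))"
        by (intro mult_left_mono) auto
      hence "logloss n x (W t) \<le> 1 / (8 * \<eta>)" using n1
        by (simp add: logloss_def)
      thus False using F by simp
    qed
    then obtain i where i: "i < n" "ln (1 + exp (- (W t \<bullet> x i))) > 1 / (8 * \<eta>)" by blast
    have zi: "W t \<bullet> x i < g * lam g \<eta>"
      using loss_thresh[OF _ i(2)] e0 glam by simp
    have dec: "W t \<bullet> x i = h t * (wstar \<bullet> x i) + v t * (vstar \<bullet> x i)"
      unfolding h_def v_def by (rule decomp2[OF wn vn vw])
    have "h t * (wstar \<bullet> x i) \<ge> h t * g" using ai[OF i(1)] hnn by (intro mult_left_mono) auto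
    moreover have "v t * (vstar \<bullet> x i) \<ge> - \<bar>v t\<bar>"
    proof -
      have "\<bar>v t * (vstar \<bullet> x i)\<bar> \<le> \<bar>v t\<bar> * 1"
        unfolding abs_mult using cs[OF vn i(1)] by (intro mult_left_mono) auto
      thus ?thesis by linarith
    qed
    ultimately show ?thesis using zi dec by (simp add: mult.commute)
  qed
  show ?thesis
  proof (cases t)
    case 0
    then show ?thesis using hs[of 0] h0 Dh0[of 0] by (simp add: h_def W_def g_def)
  next
    case (Suc m)
    have ht: "h t \<ge> \<eta> * g / 2" using h1 Suc by simp
    have "g * lam g \<eta> \<le> \<eta> * g\<^sup>2 / 4"
      using glam eta_bound[OF g0 g1 e0] eb by (simp add: eta0_def g_def)
    hence "lam g \<eta> \<le> \<eta> * g / 4" using g0 by (simp add: power2_eq_square field_simps)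
    hence lam2: "2 * lam g \<eta> \<le> h t" using ht by linarith
    have o: "h t \<ge> lam g \<eta>" "logloss n x (W t) > 1 / (8 * \<eta>)"
      "logloss n x (W (Suc t)) > 1 / (8 * \<eta>)" "v (Suc t) * v t < 0"
      using osc by (auto simp: oscillation_def h_def v_def W_def g_def)
    have vt: "\<bar>v t\<bar> > g * h t - g * lam g \<eta>" using vbound[OF o(2)] .
    have vt1: "\<bar>v (Suc t)\<bar> > g * h (Suc t) - g * lam g \<eta>" using vbound[OF o(3)] .
    have "h (Suc t) \<ge> h t" using hs Dh0 by (simp add: add_increasing2)
    hence "g * h (Suc t) \<ge> g * h t" using g0 by (intro mult_left_mono) auto
    hence sumv: "\<bar>v t\<bar> + \<bar>v (Suc t)\<bar> \<ge> g * (2 * h t - 2 * lam g \<eta>)"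
      using vt vt1 by (simp add: algebra_simps)
    have "\<bar>Dv t\<bar> = \<bar>v t\<bar> + \<bar>v (Suc t)\<bar>"
      using abs_diff_opp[OF o(4)] vs[of t] by (simp add: abs_minus_commute add.commute)
    hence "Dh t \<ge> g * (\<bar>v t\<bar> + \<bar>v (Suc t)\<bar>)" using key[of t] by simp
    also have "g * (\<bar>v t\<bar> + \<bar>v (Suc t)\<bar>) \<ge> g * (g * (2 * h t - 2 * lam g \<eta>))"
      using sumv g0 by (intro mult_left_mono) auto
    also have "g * (g * (2 * h t - 2 * lam g \<eta>)) \<ge> g * (g * h t)"
      using lam2 g0 by (intro mult_left_mono) auto
    finally have "Dh t \<ge> g\<^sup>2 * h t" by (simp add: power2_eq_square mult.assoc)
    hence "h (Suc t) \<ge> (1 + g\<^sup>2) * h t" using hs[of t] by (simp add: algebra_simps)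
    thus ?thesis by (simp add: h_def W_def g_def)
  qed
qed

end
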